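(* Let $C$ be a free abelian group with basis $\{c_i\mid i\in\mathbb{Z}\}$, so each $x\in C$ is uniquely $x=\sum_{i\in\mathbb{Z}}x_ic_i$ with finitely many nonzero $x_i\in\mathbb{Z}$. For $x,y\in C$ with $y=\sum_i y_ic_i$, define \[\lambda_x(y)=\sum_{i\in\mathbb{Z}}y_i\,c_{i+\sum_{j\in\mathbb{Z}}x_j},\] and define $xy=x+\lambda_x(y)$. Then $(C,+,\cdot)$ is a left brace with $C^{(3)}=\{0\}$, it is generated (as a left brace) by $c_0$, and $C^j\neq\{0\}$ for all $j\in\mathbb{N}$. Moreover, if $A$ is any left brace with $A^{(3)}=\{0\}$ and $b\in A$, there exists a unique left brace epimorphism $\alpha$ from $C$ onto the subbrace of $A$ generated by $b$ with $\alpha(c_0)=b$.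
   Context: A left brace $(A,+,\cdot)$ is a set $A$ with two binary operations such that $(A,+)$ is an abelian group, $(A,\cdot)$ is a group, and $a(b+c)=ab-a+ac$ for all $a,b,c\in A$. In a left brace, $a*b=-a+ab-b$. For subsets $L,M\subseteq A$, $L*M$ is the subgroup of $(A,+)$ generated by $\{l*m\mid l\in L,m\in M\}$. Set $A^{(1)}=A$, $A^{(r+1)}=A^{(r)}*A$, and $A^1=A$, $A^{r+1}=A*A^r$ for $r\ge1$. A subbrace is a subset that is a subgroup of both $(A,+)$ and $(A,\cdot)$; the subbrace generated by an element is the intersection of all subbraces containing it. A left brace homomorphism is a map that is a homomorphism for both operations. *)

theory Defs
  imports "HOL-Algebra.Generated_Groups"
begin

definition addgrp :: "'a set \<Rightarrow> ('a \<Rightarrow> 'a \<Rightarrow> 'a) \<Rightarrow> 'a monoid" where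
  "addgrp A add = \<lparr>carrier = A, monoid.mult = add,
      one = (THE z. z \<in> A \<and> (\<forall>a\<in>A. add z a = a \<and> add a z = a))\<rparr>"

definition mulgrp :: "'a set \<Rightarrow> ('a \<Rightarrow> 'a \<Rightarrow> 'a) \<Rightarrow> 'a monoid" where
  "mulgrp A mul = \<lparr>carrier = A, monoid.mult = mul,
      one = (THE e. e \<in> A \<and> (\<forall>a\<in>A. mul e a = a \<and> mul a e = a))\<rparr>"

definition bzero :: "'a set \<Rightarrow> ('a \<Rightarrow> 'a \<Rightarrow> 'a) \<Rightarrow> 'a" where
  "bzero A add = \<one>\<^bsub>addgrp A add\<^esub>"

definition bneg :: "'a set \<Rightarrow> ('a \<Rightarrow> 'a \<Rightarrow> 'a) \<Rightarrow> 'a \<Rightarrow> 'a" where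
  "bneg A add a = inv\<^bsub>addgrp A add\<^esub> a"

definition left_brace :: "'a set \<Rightarrow> ('a \<Rightarrow> 'a \<Rightarrow> 'a) \<Rightarrow> ('a \<Rightarrow> 'a \<Rightarrow> 'a) \<Rightarrow> bool" where
  "left_brace A add mul \<longleftrightarrow>
     comm_group (addgrp A add) \<and> group (mulgrp A mul) \<and>
     (\<forall>a\<in>A. \<forall>b\<in>A. \<forall>c\<in>A.
        mul a (add b c) = add (add (mul a b) (bneg A add a)) (mul a c))"

definition bstar :: "'a set \<Rightarrow> ('a \<Rightarrow> 'a \<Rightarrow> 'a) \<Rightarrow> ('a \<Rightarrow> 'a \<Rightarrow> 'a) \<Rightarrow> 'a \<Rightarrow> 'a \<Rightarrow> 'a" where
  "bstar A add mul a b = add (add (bneg A add a) (mul a b)) (bneg A add b)"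

definition setstar :: "'a set \<Rightarrow> ('a \<Rightarrow> 'a \<Rightarrow> 'a) \<Rightarrow> ('a \<Rightarrow> 'a \<Rightarrow> 'a) \<Rightarrow> 'a set \<Rightarrow> 'a set \<Rightarrow> 'a set" where
  "setstar A add mul L M =
     generate (addgrp A add) {bstar A add mul l m | l m. l \<in> L \<and> m \<in> M}"

text \<open>Right series: rser A add mul r = A^(r) for r \<ge> 1 (index 0 is a dummy equal to A).\<close>
fun rser :: "'a set \<Rightarrow> ('a \<Rightarrow> 'a \<Rightarrow> 'a) \<Rightarrow> ('a \<Rightarrow> 'a \<Rightarrow> 'a) \<Rightarrow> nat \<Rightarrow> 'a set" where
  "rser A add mul 0 = A"
| "rser A add mul (Suc n) = (if n = 0 then A else setstar A add mul (rser A add mul n) A)"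

text \<open>Left series: lser A add mul r = A^r for r \<ge> 1 (index 0 is a dummy equal to A).\<close>
fun lser :: "'a set \<Rightarrow> ('a \<Rightarrow> 'a \<Rightarrow> 'a) \<Rightarrow> ('a \<Rightarrow> 'a \<Rightarrow> 'a) \<Rightarrow> nat \<Rightarrow> 'a set" where
  "lser A add mul 0 = A"
| "lser A add mul (Suc n) = (if n = 0 then A else setstar A add mul A (lser A add mul n))"

definition subbrace :: "'a set \<Rightarrow> ('a \<Rightarrow> 'a \<Rightarrow> 'a) \<Rightarrow> ('a \<Rightarrow> 'a \<Rightarrow> 'a) \<Rightarrow> 'a set \<Rightarrow> bool" where
  "subbrace A add mul B \<longleftrightarrow> subgroup B (addgrp A add) \<and> subgroup B (mulgrp A mul)"

definition subbrace_gen :: "'a set \<Rightarrow> ('a \<Rightarrow> 'a \<Rightarrow> 'a) \<Rightarrow> ('a \<Rightarrow> 'a \<Rightarrow> 'a) \<Rightarrow> 'a \<Rightarrow> 'a set" where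
  "subbrace_gen A add mul b = \<Inter>{B. subbrace A add mul B \<and> b \<in> B}"

definition brace_hom :: "'a set \<Rightarrow> ('a \<Rightarrow> 'a \<Rightarrow> 'a) \<Rightarrow> ('a \<Rightarrow> 'a \<Rightarrow> 'a) \<Rightarrow>
     ('b \<Rightarrow> 'b \<Rightarrow> 'b) \<Rightarrow> ('b \<Rightarrow> 'b \<Rightarrow> 'b) \<Rightarrow> ('a \<Rightarrow> 'b) \<Rightarrow> bool" where
  "brace_hom A addA mulA addB mulB f \<longleftrightarrow>
     (\<forall>x\<in>A. \<forall>y\<in>A. f (addA x y) = addB (f x) (f y) \<and> f (mulA x y) = mulB (f x) (f y))"

text \<open>C = free abelian group on c_i (i in Z), as finitely supported functions Z \<Rightarrow> Z.\<close>
definition Cset :: "(int \<Rightarrow> int) set" where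
  "Cset = {x. finite {i. x i \<noteq> 0}}"

definition Cadd :: "(int \<Rightarrow> int) \<Rightarrow> (int \<Rightarrow> int) \<Rightarrow> (int \<Rightarrow> int)" where
  "Cadd x y = (\<lambda>i. x i + y i)"

definition cbasis :: "int \<Rightarrow> (int \<Rightarrow> int)" where
  "cbasis i = (\<lambda>k. if k = i then 1 else 0)"

definition coefsum :: "(int \<Rightarrow> int) \<Rightarrow> int" where
  "coefsum x = sum x {j. x j \<noteq> 0}"

text \<open>lambda_x(y) = sum_i y_i c_(i + coefsum x): coefficient at k is y_(k - coefsum x).\<close>
definition Clam :: "(int \<Rightarrow> int) \<Rightarrow> (int \<Rightarrow> int) \<Rightarrow> (int \<Rightarrow> int)" where
  "Clam x y = (\<lambda>k. y (k - coefsum x))"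

definition Cmul :: "(int \<Rightarrow> int) \<Rightarrow> (int \<Rightarrow> int) \<Rightarrow> (int \<Rightarrow> int)" where
  "Cmul x y = Cadd x (Clam x y)"

end

theory Submission
  imports Defs "HOL-Algebra.FiniteProduct"
begin

declare funcsetI[rule del] funcset_mem[rule del]

lemma addgrp_simps[simp]: "carrier (addgrp A add) = A" "monoid.mult (addgrp A add) = add"
  by (simp_all add: addgrp_def)
lemma mulgrp_simps[simp]: "carrier (mulgrp A mul) = A" "monoid.mult (mulgrp A mul) = mul"
  by (simp_all add: mulgrp_def)

definition shift :: "int \<Rightarrow> (int \<Rightarrow> int) \<Rightarrow> (int \<Rightarrow> int)" where
  "shift n y = (\<lambda>k. y (k - n))"

lemma Cset_iff: "x \<in> Cset \<longleftrightarrow> finite {i. x i \<noteq> 0}" by (simp add: Cset_def)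

lemma Cadd_closed: "x \<in> Cset \<Longrightarrow> y \<in> Cset \<Longrightarrow> Cadd x y \<in> Cset"
proof -
  assume "x \<in> Cset" "y \<in> Cset"
  then have "finite ({i. x i \<noteq> 0} \<union> {i. y i \<noteq> 0})" by (simp add: Cset_iff)
  moreover have "{i. Cadd x y i \<noteq> 0} \<subseteq> {i. x i \<noteq> 0} \<union> {i. y i \<noteq> 0}" by (auto simp: Cadd_def)
  ultimately show ?thesis by (simp add: Cset_iff finite_subset)
qed

lemma neg_closed: "x \<in> Cset \<Longrightarrow> (\<lambda>k. - x k) \<in> Cset" by (simp add: Cset_iff)
lemma zero_closed: "(\<lambda>k. 0::int) \<in> Cset" by (simp add: Cset_iff)

lemma coefsum_eq: "finite S \<Longrightarrow> {j. x j \<noteq> 0} \<subseteq> S \<Longrightarrow> coefsum x = sum x S"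
  unfolding coefsum_def by (rule sum.mono_neutral_left) auto

lemma coefsum_add: "x \<in> Cset \<Longrightarrow> y \<in> Cset \<Longrightarrow> coefsum (Cadd x y) = coefsum x + coefsum y"
proof -
  assume "x \<in> Cset" "y \<in> Cset"
  then have f: "finite ({i. x i \<noteq> 0} \<union> {i. y i \<noteq> 0})" (is "finite ?S") by (simp add: Cset_iff)
  have "coefsum (Cadd x y) = sum (Cadd x y) ?S" by (rule coefsum_eq[OF f]) (auto simp: Cadd_def)
  also have "\<dots> = sum x ?S + sum y ?S" by (simp add: Cadd_def sum.distrib)
  also have "sum x ?S = coefsum x" by (rule coefsum_eq[OF f, symmetric]) auto
  also have "sum y ?S = coefsum y" by (rule coefsum_eq[OF f, symmetric]) auto
  finally show ?thesis .
qed

lemma coefsum_neg: "x \<in> Cset \<Longrightarrow> coefsum (\<lambda>k. - x k) = - coefsum x"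
  by (simp add: coefsum_def sum_negf)

lemma coefsum_zero: "coefsum (\<lambda>k. 0) = 0" by (simp add: coefsum_def)

lemma supp_shift: "{k. shift n y k \<noteq> 0} = (\<lambda>i. i + n) ` {i. y i \<noteq> 0}"
  by (auto simp: shift_def image_iff intro!: exI[of _ "_ - n"])

lemma shift_closed: "y \<in> Cset \<Longrightarrow> shift n y \<in> Cset"
  by (simp add: Cset_iff supp_shift)

lemma coefsum_shift: "y \<in> Cset \<Longrightarrow> coefsum (shift n y) = coefsum y"
proof -
  have inj: "inj_on (\<lambda>i. i + n) S" for S by (auto simp: inj_on_def)
  show ?thesis unfolding coefsum_def supp_shift
    by (subst sum.reindex[OF inj]) (simp add: shift_def)
qed

lemma Clam_shift: "Clam x y = shift (coefsum x) y" by (simp add: Clam_def shift_def)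

lemma Cmul_eq: "Cmul x y = (\<lambda>k. x k + y (k - coefsum x))"
  by (simp add: Cmul_def Cadd_def Clam_def)

lemma Cmul_closed: "x \<in> Cset \<Longrightarrow> y \<in> Cset \<Longrightarrow> Cmul x y \<in> Cset"
  unfolding Cmul_def Clam_shift by (intro Cadd_closed shift_closed)

lemma coefsum_Cmul: "x \<in> Cset \<Longrightarrow> y \<in> Cset \<Longrightarrow> coefsum (Cmul x y) = coefsum x + coefsum y"
  unfolding Cmul_def Clam_shift by (simp add: coefsum_add shift_closed coefsum_shift)

lemma addC_one: "\<one>\<^bsub>addgrp Cset Cadd\<^esub> = (\<lambda>k. 0)"
  unfolding addgrp_def by (simp, rule the_equality) (auto simp: Cadd_def zero_closed fun_eq_iff)

lemma mulC_one: "\<one>\<^bsub>mulgrp Cset Cmul\<^esub> = (\<lambda>k. 0)"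
proof -
  have "(THE e. e \<in> Cset \<and> (\<forall>a\<in>Cset. Cmul e a = a \<and> Cmul a e = a)) = (\<lambda>k. 0)"
  proof (rule the_equality)
    show "(\<lambda>k. 0) \<in> Cset \<and> (\<forall>a\<in>Cset. Cmul (\<lambda>k. 0) a = a \<and> Cmul a (\<lambda>k. 0) = a)"
      by (simp add: zero_closed Cmul_eq coefsum_zero)
    fix e assume "e \<in> Cset \<and> (\<forall>a\<in>Cset. Cmul e a = a \<and> Cmul a e = a)"
    then have "Cmul e (\<lambda>k. 0) = (\<lambda>k. 0)" using zero_closed by blast
    then show "e = (\<lambda>k. 0)" by (simp add: Cmul_eq)
  qed
  then show ?thesis by (simp add: mulgrp_def)
qed

lemma addC_comm_group: "comm_group (addgrp Cset Cadd)"
proof (rule comm_groupI)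
  fix x assume "x \<in> carrier (addgrp Cset Cadd)"
  then show "\<exists>y\<in>carrier (addgrp Cset Cadd). y \<otimes>\<^bsub>addgrp Cset Cadd\<^esub> x = \<one>\<^bsub>addgrp Cset Cadd\<^esub>"
    by (auto simp: addC_one Cadd_def intro!: bexI[of _ "\<lambda>k. - x k"] neg_closed)
qed (auto simp: addC_one Cadd_closed zero_closed, auto simp: Cadd_def)

lemma mulC_group: "group (mulgrp Cset Cmul)"
proof (rule groupI)
  fix x assume x: "x \<in> carrier (mulgrp Cset Cmul)"
  let ?y = "\<lambda>k. - x (k + coefsum x)"
  have y: "?y \<in> Cset" using shift_closed[of x "- coefsum x"] x
    by (simp add: shift_def Cset_iff)
  have cy: "coefsum ?y = - coefsum x"
    using coefsum_neg[OF shift_closed[OF _, of x "- coefsum x"]] coefsum_shift[of x "- coefsum x"] x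
    by (simp add: shift_def)
  show "\<exists>y\<in>carrier (mulgrp Cset Cmul). y \<otimes>\<^bsub>mulgrp Cset Cmul\<^esub> x = \<one>\<^bsub>mulgrp Cset Cmul\<^esub>"
    using y cy by (auto simp: mulC_one Cmul_eq fun_eq_iff intro!: bexI[of _ ?y])
next
  fix x y z assume "x \<in> carrier (mulgrp Cset Cmul)" "y \<in> carrier (mulgrp Cset Cmul)" "z \<in> carrier (mulgrp Cset Cmul)"
  then show "x \<otimes>\<^bsub>mulgrp Cset Cmul\<^esub> y \<otimes>\<^bsub>mulgrp Cset Cmul\<^esub> z =
           x \<otimes>\<^bsub>mulgrp Cset Cmul\<^esub> (y \<otimes>\<^bsub>mulgrp Cset Cmul\<^esub> z)"
  proof -
    have c: "coefsum (Cmul x y) = coefsum x + coefsum y" using \<open>x \<in> _\<close> \<open>y \<in> _\<close> by (simp add: coefsum_Cmul)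
    show ?thesis apply (simp only: mulgrp_simps Cmul_eq[of "Cmul x y" z] c)
      by (simp add: Cmul_eq fun_eq_iff algebra_simps)
  qed
qed (auto simp: mulC_one Cmul_closed zero_closed, auto simp: Cmul_eq coefsum_zero)

lemma bneg_C: "x \<in> Cset \<Longrightarrow> bneg Cset Cadd x = (\<lambda>k. - x k)"
  unfolding bneg_def
  by (rule comm_group.axioms(2)[OF addC_comm_group, THEN group.inv_equality])
     (auto simp: addC_one Cadd_def neg_closed)

lemma bzero_C: "bzero Cset Cadd = (\<lambda>k. 0)" by (simp add: bzero_def addC_one)

lemma C_left_brace: "left_brace Cset Cadd Cmul"
  unfolding left_brace_def
  by (auto simp: addC_comm_group mulC_group bneg_C Cmul_closed Cadd_closed coefsum_add Cmul_eq Cadd_def fun_eq_iff)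

lemma addC_group: "group (addgrp Cset Cadd)"
  using addC_comm_group comm_group.axioms(2) by blast

lemma bstar_C: "a \<in> Cset \<Longrightarrow> b \<in> Cset \<Longrightarrow> bstar Cset Cadd Cmul a b = (\<lambda>k. b (k - coefsum a) - b k)"
  by (simp add: bstar_def bneg_C Cmul_closed Cadd_def Cmul_eq fun_eq_iff)

lemma bstar_closed: "a \<in> Cset \<Longrightarrow> b \<in> Cset \<Longrightarrow> bstar Cset Cadd Cmul a b \<in> Cset"
proof -
  assume lm: "a \<in> Cset" "b \<in> Cset"
  have e: "bstar Cset Cadd Cmul a b = Cadd (shift (coefsum a) b) (\<lambda>k. - b k)"
    using lm by (simp add: bstar_C Cadd_def shift_def)
  show ?thesis unfolding e using lm by (simp add: Cadd_closed shift_closed neg_closed)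
qed

lemma K0_subgroup: "subgroup {x \<in> Cset. coefsum x = 0} (addgrp Cset Cadd)"
proof (rule group.subgroupI[OF addC_group])
  show "{x \<in> Cset. coefsum x = 0} \<noteq> {}" using zero_closed coefsum_zero by blast
  fix a assume "a \<in> {x \<in> Cset. coefsum x = 0}"
  then show "inv\<^bsub>addgrp Cset Cadd\<^esub> a \<in> {x \<in> Cset. coefsum x = 0}"
    using bneg_C[of a] by (simp add: bneg_def neg_closed coefsum_neg)
next
  fix a b assume "a \<in> {x \<in> Cset. coefsum x = 0}" "b \<in> {x \<in> Cset. coefsum x = 0}"
  then show "a \<otimes>\<^bsub>addgrp Cset Cadd\<^esub> b \<in> {x \<in> Cset. coefsum x = 0}"
    by (simp add: Cadd_closed coefsum_add)
qed auto

lemma setstar_CC: "setstar Cset Cadd Cmul Cset Cset \<subseteq> {x \<in> Cset. coefsum x = 0}"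
  unfolding setstar_def
proof (rule group.generate_subgroup_incl[OF addC_group _ K0_subgroup])
  show "{bstar Cset Cadd Cmul l m |l m. l \<in> Cset \<and> m \<in> Cset} \<subseteq> {x \<in> Cset. coefsum x = 0}"
  proof safe
    fix l m assume lm: "l \<in> Cset" "m \<in> Cset"
    have e: "bstar Cset Cadd Cmul l m = Cadd (shift (coefsum l) m) (\<lambda>k. - m k)"
      using lm by (simp add: bstar_C Cadd_def shift_def)
    show "bstar Cset Cadd Cmul l m \<in> Cset" "coefsum (bstar Cset Cadd Cmul l m) = 0"
      unfolding e using lm
      by (simp_all add: Cadd_closed shift_closed neg_closed coefsum_add coefsum_shift coefsum_neg)
  qed
qed

lemma rser3_C: "rser Cset Cadd Cmul 3 = {bzero Cset Cadd}"
proof -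
  have r: "rser Cset Cadd Cmul 3 = setstar Cset Cadd Cmul (setstar Cset Cadd Cmul Cset Cset) Cset"
    by (simp add: numeral_eq_Suc)
  have ne: "(\<lambda>k. 0) \<in> setstar Cset Cadd Cmul Cset Cset"
    unfolding setstar_def using generate.one[of "addgrp Cset Cadd"] by (simp add: addC_one)
  have "{bstar Cset Cadd Cmul l m |l m. l \<in> setstar Cset Cadd Cmul Cset Cset \<and> m \<in> Cset}
        = {\<one>\<^bsub>addgrp Cset Cadd\<^esub>}"
  proof safe
    fix l m assume "l \<in> setstar Cset Cadd Cmul Cset Cset" "m \<in> Cset"
    then show "bstar Cset Cadd Cmul l m = \<one>\<^bsub>addgrp Cset Cadd\<^esub>"
      using setstar_CC by (auto simp: bstar_C addC_one)
  next
    show "\<exists>l m. \<one>\<^bsub>addgrp Cset Cadd\<^esub> = bstar Cset Cadd Cmul l m \<and> l \<in> setstar Cset Cadd Cmul Cset Cset \<and> m \<in> Cset"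
      using ne zero_closed setstar_CC by (intro exI[of _ "\<lambda>k. 0"] exI[of _ "\<lambda>k. 0"]) (auto simp: bstar_C addC_one)
  qed
  then show ?thesis unfolding r setstar_def bzero_def
    by (simp add: group.generate_one[OF addC_group])
qed

lemma cbasis_closed: "cbasis i \<in> Cset"
proof -
  have "{k. cbasis i k \<noteq> 0} = {i}" by (auto simp: cbasis_def)
  then show ?thesis by (simp add: Cset_iff)
qed

lemma coefsum_cbasis: "coefsum (cbasis i) = 1"
proof -
  have "{k. cbasis i k \<noteq> 0} = {i}" by (auto simp: cbasis_def)
  then show ?thesis by (simp add: coefsum_def cbasis_def)
qed

lemma C_gen:
  assumes S: "subbrace Cset Cadd Cmul S" and c0: "cbasis 0 \<in> S"
  shows "Cset \<subseteq> S"
proof -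
  have Sa: "subgroup S (addgrp Cset Cadd)" and Sm: "subgroup S (mulgrp Cset Cmul)"
    using S by (auto simp: subbrace_def)
  have SC: "S \<subseteq> Cset" using subgroup.subset[OF Sa] by simp
  have add: "Cadd x y \<in> S" if "x \<in> S" "y \<in> S" for x y
    using subgroup.m_closed[OF Sa that] by simp
  have neg: "(\<lambda>k. - x k) \<in> S" if "x \<in> S" for x
    using subgroup.m_inv_closed[OF Sa that] bneg_C[of x] SC that by (auto simp: bneg_def)
  have zero: "(\<lambda>k. 0) \<in> S" using subgroup.one_closed[OF Sa] by (simp add: addC_one)
  have mul: "Cmul x y \<in> S" if "x \<in> S" "y \<in> S" for x y
    using subgroup.m_closed[OF Sm that] by simp
  define ic where "ic = (\<lambda>k. - cbasis (-1) k)"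
  have icC: "ic \<in> Cset" unfolding ic_def by (rule neg_closed[OF cbasis_closed])
  have icS: "coefsum ic = -1" unfolding ic_def by (simp add: coefsum_neg cbasis_closed coefsum_cbasis)
  have "inv\<^bsub>mulgrp Cset Cmul\<^esub> (cbasis 0) = ic"
    by (rule group.inv_equality[OF mulC_group])
       (simp_all add: icC cbasis_closed mulC_one Cmul_eq icS, simp add: ic_def cbasis_def fun_eq_iff)
  then have ic: "ic \<in> S" using subgroup.m_inv_closed[OF Sm c0] by simp
  have cm1: "cbasis (-1) \<in> S" using neg[OF ic] by (simp add: ic_def)
  have bas: "cbasis i \<in> S" for i
  proof (induction i rule: int_induct[where k=0])
    case base show ?case by (rule c0)
  next
    case (step1 i)
    have "cbasis (i+1) = Cadd (Cmul (cbasis 0) (cbasis i)) (\<lambda>k. - cbasis 0 k)"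
      by (simp add: Cmul_eq coefsum_cbasis, auto simp: Cadd_def cbasis_def fun_eq_iff)
    then show ?case using step1 add mul neg c0 by metis
  next
    case (step2 i)
    have "cbasis (i-1) = Cadd (Cmul ic (cbasis i)) (cbasis (-1))"
      by (simp add: Cmul_eq icS, auto simp: ic_def Cadd_def cbasis_def fun_eq_iff)
    then show ?case using step2 add mul ic cm1 by metis
  qed
  have mult: "(\<lambda>k. n * cbasis a k) \<in> S" for n a
  proof (induction n rule: int_induct[where k=0])
    case base show ?case using zero by simp
  next
    case (step1 i)
    have "(\<lambda>k. (i+1) * cbasis a k) = Cadd (\<lambda>k. i * cbasis a k) (cbasis a)"
      by (simp add: Cadd_def algebra_simps)
    then show ?case using step1 add bas by metis
  next
    case (step2 i)
    have "(\<lambda>k. (i-1) * cbasis a k) = Cadd (\<lambda>k. i * cbasis a k) (\<lambda>k. - cbasis a k)"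
      by (simp add: Cadd_def algebra_simps)
    then show ?case using step2 add bas neg by metis
  qed
  have main: "\<forall>x. {i. x i \<noteq> 0} \<subseteq> F \<longrightarrow> x \<in> S" if "finite F" for F
    using that
  proof (induction F rule: finite_induct)
    case empty
    show ?case
    proof (intro allI impI)
      fix x :: "int \<Rightarrow> int" assume "{i. x i \<noteq> 0} \<subseteq> {}"
      then have "x = (\<lambda>k. 0)" by (auto simp: fun_eq_iff)
      then show "x \<in> S" using zero by simp
    qed
  next
    case (insert a F)
    show ?case
    proof (intro allI impI)
      fix x :: "int \<Rightarrow> int" assume sx: "{i. x i \<noteq> 0} \<subseteq> insert a F"
      have "{i. (x(a:=0)) i \<noteq> 0} \<subseteq> F" using sx by auto
      then have h1: "x(a:=0) \<in> S" using insert.IH by blast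
      have eq: "x = Cadd (x(a:=0)) (\<lambda>k. x a * cbasis a k)"
        by (auto simp: Cadd_def cbasis_def fun_eq_iff)
      have h2: "Cadd (x(a:=0)) (\<lambda>k. x a * cbasis a k) \<in> S" by (rule add[OF h1 mult])
      show "x \<in> S" using h2 eq by metis
    qed
  qed
  show ?thesis using main by (auto simp: Cset_iff)
qed

lemma subbrace_self: "left_brace A add mul \<Longrightarrow> subbrace A add mul A"
  unfolding subbrace_def left_brace_def
  using group.subgroup_self comm_group.axioms(2) by (metis addgrp_simps(1) mulgrp_simps(1))

lemma subbrace_gen_C: "subbrace_gen Cset Cadd Cmul (cbasis 0) = Cset"
proof
  show "subbrace_gen Cset Cadd Cmul (cbasis 0) \<subseteq> Cset"
    unfolding subbrace_gen_def using subbrace_self[OF C_left_brace] cbasis_closed by blast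
  show "Cset \<subseteq> subbrace_gen Cset Cadd Cmul (cbasis 0)"
    unfolding subbrace_gen_def using C_gen by blast
qed

lemma diff_nonzero:
  assumes x: "x \<in> Cset" "x \<noteq> (\<lambda>k. 0)"
  shows "(\<lambda>k. x (k - 1) - x k) \<noteq> (\<lambda>k. 0)"
proof
  let ?S = "{i. x i \<noteq> 0}"
  have f: "finite ?S" using x by (simp add: Cset_iff)
  have ne: "?S \<noteq> {}" using x by auto
  define m where "m = Max ?S"
  have "m \<in> ?S" using Max_in[OF f ne] m_def by simp
  moreover have "x (m+1) = 0" using Max_ge[OF f, of "m+1"] m_def by force
  moreover assume "(\<lambda>k. x (k - 1) - x k) = (\<lambda>k. 0)"
  then have "x (m + 1 - 1) - x (m+1) = 0" by (metis)
  ultimately show False by simp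
qed

lemma lser_C: "\<forall>j\<ge>1. lser Cset Cadd Cmul j \<noteq> {bzero Cset Cadd}"
proof -
  have "lser Cset Cadd Cmul (Suc n) \<subseteq> Cset \<and> (\<exists>x\<in>lser Cset Cadd Cmul (Suc n). x \<noteq> (\<lambda>k. 0))" for n
  proof (induction n)
    case 0
    have "cbasis 0 \<noteq> (\<lambda>k. 0)" by (auto simp: cbasis_def fun_eq_iff)
    then show ?case using cbasis_closed by auto
  next
    case (Suc n)
    then obtain x where x: "x \<in> lser Cset Cadd Cmul (Suc n)" "x \<noteq> (\<lambda>k. 0)" and sub: "lser Cset Cadd Cmul (Suc n) \<subseteq> Cset" by blast
    have e: "lser Cset Cadd Cmul (Suc (Suc n)) = setstar Cset Cadd Cmul Cset (lser Cset Cadd Cmul (Suc n))" by simp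
    have gsub: "{bstar Cset Cadd Cmul l m |l m. l \<in> Cset \<and> m \<in> lser Cset Cadd Cmul (Suc n)} \<subseteq> Cset"
      using sub by (auto intro!: bstar_closed)
    have "bstar Cset Cadd Cmul (cbasis 0) x \<in> setstar Cset Cadd Cmul Cset (lser Cset Cadd Cmul (Suc n))"
      unfolding setstar_def using x cbasis_closed by (intro generate.incl) blast
    moreover have "bstar Cset Cadd Cmul (cbasis 0) x = (\<lambda>k. x (k - 1) - x k)"
      using x sub cbasis_closed by (auto simp: bstar_C coefsum_cbasis)
    moreover have "x \<in> Cset" using x sub by auto
    ultimately show ?case unfolding e using diff_nonzero[of x] x
      group.generate_incl[OF addC_group, of "{bstar Cset Cadd Cmul l m |l m. l \<in> Cset \<and> m \<in> lser Cset Cadd Cmul (Suc n)}"] gsub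
      unfolding setstar_def by auto
  qed
  then show ?thesis
  proof (intro allI impI)
    fix j :: nat assume j: "j \<ge> 1"
    then obtain n where "j = Suc n" by (metis Suc_le_D One_nat_def)
    moreover assume "\<And>n. lser Cset Cadd Cmul (Suc n) \<subseteq> Cset \<and> (\<exists>x\<in>lser Cset Cadd Cmul (Suc n). x \<noteq> (\<lambda>k. 0))"
    ultimately obtain x where "x \<in> lser Cset Cadd Cmul j" "x \<noteq> (\<lambda>k. 0)" by blast
    then show "lser Cset Cadd Cmul j \<noteq> {bzero Cset Cadd}" by (auto simp: bzero_C)
  qed
qed

locale lbrace =
  fixes A :: "'a set" and add mul :: "'a \<Rightarrow> 'a \<Rightarrow> 'a"
  assumes lb: "left_brace A add mul"
begin

lemma Gcg: "comm_group (addgrp A add)" using lb by (simp add: left_brace_def)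
lemma Mg: "group (mulgrp A mul)" using lb by (simp add: left_brace_def)

sublocale G: comm_group "addgrp A add" by (rule Gcg)
sublocale M: group "mulgrp A mul" by (rule Mg)

abbreviation z where "z \<equiv> bzero A add"
abbreviation n where "n \<equiv> bneg A add"

lemma zdef: "z = \<one>\<^bsub>addgrp A add\<^esub>" by (simp add: bzero_def)
lemma ndef: "n x = inv\<^bsub>addgrp A add\<^esub> x" by (simp add: bneg_def)

lemma add_closed[simp]: "x \<in> A \<Longrightarrow> y \<in> A \<Longrightarrow> add x y \<in> A"
  using G.m_closed[of x y] by simp
lemma z_closed[simp]: "z \<in> A" using G.one_closed by (simp add: zdef)
lemma n_closed[simp]: "x \<in> A \<Longrightarrow> n x \<in> A" using G.inv_closed[of x] by (simp add: ndef)
lemma add_assoc: "x \<in> A \<Longrightarrow> y \<in> A \<Longrightarrow> w \<in> A \<Longrightarrow> add (add x y) w = add x (add y w)"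
  using G.m_assoc[of x y w] by simp
lemma add_comm: "x \<in> A \<Longrightarrow> y \<in> A \<Longrightarrow> add x y = add y x"
  using G.m_comm[of x y] by simp
lemma add_lcomm: "x \<in> A \<Longrightarrow> y \<in> A \<Longrightarrow> w \<in> A \<Longrightarrow> add x (add y w) = add y (add x w)"
  using G.m_lcomm[of x y w] by simp
lemmas add_ac = add_assoc add_comm add_lcomm
lemma add_z[simp]: "x \<in> A \<Longrightarrow> add z x = x" "x \<in> A \<Longrightarrow> add x z = x"
  using G.l_one[of x] G.r_one[of x] by (simp_all add: zdef)
lemma add_n[simp]: "x \<in> A \<Longrightarrow> add x (n x) = z" "x \<in> A \<Longrightarrow> add (n x) x = z"
  using G.l_inv[of x] G.r_inv[of x] by (simp_all add: zdef ndef)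
lemma add_n2[simp]: "x \<in> A \<Longrightarrow> y \<in> A \<Longrightarrow> add x (add (n x) y) = y"
  "x \<in> A \<Longrightarrow> y \<in> A \<Longrightarrow> add (n x) (add x y) = y"
  by (simp_all flip: add_assoc)
lemma n_n[simp]: "x \<in> A \<Longrightarrow> n (n x) = x" using G.inv_inv[of x] by (simp add: ndef)
lemma n_z[simp]: "n z = z" using G.inv_one by (simp add: zdef ndef)
lemma n_add: "x \<in> A \<Longrightarrow> y \<in> A \<Longrightarrow> n (add x y) = add (n x) (n y)"
  using G.inv_mult[of x y] by (simp add: ndef)
lemma add_cancel: "x \<in> A \<Longrightarrow> y \<in> A \<Longrightarrow> w \<in> A \<Longrightarrow> add x y = add x w \<longleftrightarrow> y = w"
  by (metis add_n2(2))
lemma n_unique: "x \<in> A \<Longrightarrow> y \<in> A \<Longrightarrow> add x y = z \<Longrightarrow> n x = y"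
  by (metis add_n(1) add_cancel n_closed)

lemma mul_closed[simp]: "x \<in> A \<Longrightarrow> y \<in> A \<Longrightarrow> mul x y \<in> A"
  using M.m_closed[of x y] by simp
lemma mul_assoc: "x \<in> A \<Longrightarrow> y \<in> A \<Longrightarrow> w \<in> A \<Longrightarrow> mul (mul x y) w = mul x (mul y w)"
  using M.m_assoc[of x y w] by simp

lemma dist: "a \<in> A \<Longrightarrow> b \<in> A \<Longrightarrow> c \<in> A \<Longrightarrow> mul a (add b c) = add (add (mul a b) (n a)) (mul a c)"
  using lb by (simp add: left_brace_def)

lemma oneM: "\<one>\<^bsub>mulgrp A mul\<^esub> = z"
proof -
  let ?o = "\<one>\<^bsub>mulgrp A mul\<^esub>"
  have o: "?o \<in> A" using M.one_closed by simp
  have l: "mul ?o y = y" if "y \<in> A" for y using M.l_one[of y] that by simp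
  have "mul ?o (add z z) = add (add (mul ?o z) (n ?o)) (mul ?o z)" by (rule dist) (simp_all add: o)
  then have "n ?o = z" by (simp add: l o add_ac)
  then show ?thesis by (metis n_n n_z o)
qed

abbreviation mi where "mi x \<equiv> inv\<^bsub>mulgrp A mul\<^esub> x"

lemma mi_closed[simp]: "x \<in> A \<Longrightarrow> mi x \<in> A" using M.inv_closed[of x] by simp
lemma mul_z[simp]: "x \<in> A \<Longrightarrow> mul z x = x" "x \<in> A \<Longrightarrow> mul x z = x"
  using M.l_one[of x] M.r_one[of x] by (simp_all add: oneM)
lemma mul_mi[simp]: "x \<in> A \<Longrightarrow> mul x (mi x) = z" "x \<in> A \<Longrightarrow> mul (mi x) x = z"
  using M.l_inv[of x] M.r_inv[of x] by (simp_all add: oneM)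

definition lam where "lam a y = add (n a) (mul a y)"

lemma lam_closed[simp]: "a \<in> A \<Longrightarrow> y \<in> A \<Longrightarrow> lam a y \<in> A" by (simp add: lam_def)

lemma mul_lam: "a \<in> A \<Longrightarrow> y \<in> A \<Longrightarrow> mul a y = add a (lam a y)" by (simp add: lam_def)

lemma lam_add: "a \<in> A \<Longrightarrow> b \<in> A \<Longrightarrow> c \<in> A \<Longrightarrow> lam a (add b c) = add (lam a b) (lam a c)"
  by (simp add: lam_def dist add_ac)

lemma lam_z[simp]: "a \<in> A \<Longrightarrow> lam a z = z"
  by (simp add: lam_def)

lemma lam_n: "a \<in> A \<Longrightarrow> b \<in> A \<Longrightarrow> lam a (n b) = n (lam a b)"
proof -
  assume a: "a \<in> A" "b \<in> A"
  have h: "add (lam a b) (lam a (n b)) = z" using lam_add[of a b "n b"] a by simp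
  have "n (lam a b) = lam a (n b)" by (rule n_unique) (use a h in auto)
  then show ?thesis by simp
qed

lemma lam_zero[simp]: "y \<in> A \<Longrightarrow> lam z y = y" by (simp add: lam_def)

lemma lam_mul: "a \<in> A \<Longrightarrow> b \<in> A \<Longrightarrow> c \<in> A \<Longrightarrow> lam (mul a b) c = lam a (lam b c)"
proof -
  assume a: "a \<in> A" "b \<in> A" "c \<in> A"
  have "lam a (lam b c) = add (lam a (n b)) (lam a (mul b c))" unfolding lam_def[of b c]
    using a by (simp add: lam_add)
  also have "\<dots> = add (n (lam a b)) (lam a (mul b c))" using a by (simp add: lam_n)
  also have "\<dots> = lam (mul a b) c"
    using a by (simp add: lam_def mul_assoc n_add add_ac)
  finally show ?thesis by simp
qed

lemma lam_mi: "a \<in> A \<Longrightarrow> y \<in> A \<Longrightarrow> lam a (lam (mi a) y) = y"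
  by (simp flip: lam_mul)

lemma bstar_lam: "a \<in> A \<Longrightarrow> c \<in> A \<Longrightarrow> bstar A add mul a c = add (lam a c) (n c)"
  by (simp add: bstar_def lam_def)

lemma bstar_closed[simp]: "a \<in> A \<Longrightarrow> c \<in> A \<Longrightarrow> bstar A add mul a c \<in> A"
  by (simp add: bstar_lam)

end

locale lbrace3 = lbrace +
  assumes r3: "rser A add mul 3 = {bzero A add}"
begin

lemma lam_star: "a \<in> A \<Longrightarrow> c \<in> A \<Longrightarrow> y \<in> A \<Longrightarrow> lam (bstar A add mul a c) y = y"
proof -
  assume a: "a \<in> A" "c \<in> A" "y \<in> A"
  have r: "rser A add mul 3 = setstar A add mul (setstar A add mul A A) A"
    by (simp add: numeral_eq_Suc)
  have "bstar A add mul a c \<in> setstar A add mul A A"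
    unfolding setstar_def using a by (intro generate.incl) blast
  then have "bstar A add mul (bstar A add mul a c) y \<in> rser A add mul 3"
    unfolding r setstar_def using a by (intro generate.incl) blast
  then have "add (lam (bstar A add mul a c) y) (n y) = z" using a by (simp add: r3 bstar_lam)
  then show ?thesis using a by (metis add_n(2) add_cancel add_comm lam_closed bstar_closed n_closed)
qed

lemma lam_addx: "x \<in> A \<Longrightarrow> c \<in> A \<Longrightarrow> y \<in> A \<Longrightarrow> lam (add x c) y = lam x (lam c y)"
proof -
  assume a: "x \<in> A" "c \<in> A" "y \<in> A"
  define k where "k = bstar A add mul (mi x) c"
  have k: "k \<in> A" using a by (simp add: k_def)
  have kc: "mul k c = add k c" using a k lam_star[of "mi x" c c] by (simp add: mul_lam k_def)
  have "add k c = lam (mi x) c" using a by (simp add: k_def bstar_lam add_assoc)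
  then have "mul x (mul k c) = add x c" using a k kc by (simp add: mul_lam lam_mi)
  then have "lam (add x c) y = lam x (lam k (lam c y))" using a k by (metis lam_mul mul_closed)
  then show ?thesis using a k lam_star[of "mi x" c] by (simp add: k_def)
qed

lemma lam_lam: "a \<in> A \<Longrightarrow> c \<in> A \<Longrightarrow> y \<in> A \<Longrightarrow> lam (lam a c) y = lam c y"
proof -
  assume a: "a \<in> A" "c \<in> A" "y \<in> A"
  have "lam a c = add (bstar A add mul a c) c" using a by (simp add: bstar_lam add_assoc)
  then show ?thesis using a by (simp add: lam_addx lam_star)
qed

end

declare funcsetI[intro] funcset_mem[dest]

lemma hom_finprod_gen:
  assumes G: "comm_group G" and H: "comm_group H" and h: "h \<in> hom G H"
    and F: "finite F"
  shows "f \<in> F \<rightarrow> carrier G \<Longrightarrow> h (finprod G f F) = finprod H (\<lambda>i. h (f i)) F"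
  using F
proof (induction F rule: finite_induct)
  case empty
  have "group_hom G H h" using G H h
    by (simp add: group_hom_def group_hom_axioms_def comm_group.axioms(2))
  then show ?case by (simp add: comm_monoid.finprod_empty[OF comm_group.axioms(1)[OF G]]
     comm_monoid.finprod_empty[OF comm_group.axioms(1)[OF H]] group_hom.hom_one)
next
  case (insert a F)
  have hc: "h x \<in> carrier H" if "x \<in> carrier G" for x using h that by (auto simp: hom_def)
  have fa: "f a \<in> carrier G" and fF: "f \<in> F \<rightarrow> carrier G" using insert.prems by auto
  have "h (finprod G f (insert a F)) = h (f a \<otimes>\<^bsub>G\<^esub> finprod G f F)"
    using comm_monoid.finprod_insert[OF comm_group.axioms(1)[OF G] insert.hyps(1,2) fF fa] by simp
  also have "\<dots> = h (f a) \<otimes>\<^bsub>H\<^esub> h (finprod G f F)"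
    using h fa comm_monoid.finprod_closed[OF comm_group.axioms(1)[OF G] fF] by (simp add: hom_mult)
  also have "\<dots> = h (f a) \<otimes>\<^bsub>H\<^esub> finprod H (\<lambda>i. h (f i)) F" using insert.IH[OF fF] by simp
  also have "\<dots> = finprod H (\<lambda>i. h (f i)) (insert a F)"
  proof -
    have hfF: "(\<lambda>i. h (f i)) \<in> F \<rightarrow> carrier H" using fF hc by auto
    show ?thesis using comm_monoid.finprod_insert[OF comm_group.axioms(1)[OF H] insert.hyps(1,2) hfF hc[OF fa]]
      by simp
  qed
  finally show ?case .
qed

context lbrace3
begin

definition e :: "'a \<Rightarrow> int \<Rightarrow> 'a" where "e b m = b [^]\<^bsub>mulgrp A mul\<^esub> m"
definition beta where "beta b i = lam (e b i) b"
definition alpha :: "'a \<Rightarrow> (int \<Rightarrow> int) \<Rightarrow> 'a" where "alpha b x = finprod (addgrp A add) (\<lambda>i. beta b i [^]\<^bsub>addgrp A add\<^esub> x i) {i. x i \<noteq> 0}"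

lemma e_closed[simp]: "b \<in> A \<Longrightarrow> e b m \<in> A" using M.int_pow_closed[of b m] by (simp add: e_def)
lemma e_add: "b \<in> A \<Longrightarrow> e b (i + j) = mul (e b i) (e b j)" using M.int_pow_mult[of b i j] by (simp add: e_def)
lemma e_0[simp]: "e b 0 = z" by (simp add: e_def oneM)
lemma e_1[simp]: "b \<in> A \<Longrightarrow> e b 1 = b" using M.int_pow_1[of b] by (simp add: e_def)

lemma beta_closed[simp]: "b \<in> A \<Longrightarrow> beta b i \<in> A" by (simp add: beta_def)
lemma beta_shift: "b \<in> A \<Longrightarrow> beta b (i + s) = lam (e b s) (beta b i)"
  by (simp add: beta_def e_add[of b s i, simplified add.commute] add.commute lam_mul)

lemma gpow_closed[simp]: "u \<in> A \<Longrightarrow> u [^]\<^bsub>addgrp A add\<^esub> (k::int) \<in> A"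
  using G.int_pow_closed[of u k] by simp

lemma alpha_eq:
  assumes b: "b \<in> A" and F: "finite F" "{i. x i \<noteq> 0} \<subseteq> F"
  shows "alpha b x = finprod (addgrp A add) (\<lambda>i. beta b i [^]\<^bsub>addgrp A add\<^esub> x i) F"
  unfolding alpha_def
  by (rule G.finprod_mono_neutral_cong_left) (use F b in auto)

lemma alpha_closed[simp]: "b \<in> A \<Longrightarrow> alpha b x \<in> A"
  unfolding alpha_def using G.finprod_closed[of "\<lambda>i. beta b i [^]\<^bsub>addgrp A add\<^esub> x i"] by auto

lemma alpha_add:
  assumes b: "b \<in> A" and x: "x \<in> Cset" and y: "y \<in> Cset"
  shows "alpha b (Cadd x y) = add (alpha b x) (alpha b y)"
proof -
  let ?F = "{i. x i \<noteq> 0} \<union> {i. y i \<noteq> 0}"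
  have F: "finite ?F" using x y by (simp add: Cset_iff)
  have "alpha b (Cadd x y) = finprod (addgrp A add) (\<lambda>i. beta b i [^]\<^bsub>addgrp A add\<^esub> (x i + y i)) ?F"
  proof -
    have sub: "{i. Cadd x y i \<noteq> 0} \<subseteq> ?F" by (auto simp: Cadd_def)
    show ?thesis using alpha_eq[OF b F sub] by (simp add: Cadd_def)
  qed
  also have "\<dots> = finprod (addgrp A add) (\<lambda>i. beta b i [^]\<^bsub>addgrp A add\<^esub> x i \<otimes>\<^bsub>addgrp A add\<^esub> beta b i [^]\<^bsub>addgrp A add\<^esub> y i) ?F"
    using b by (simp add: G.int_pow_mult)
  also have "\<dots> = finprod (addgrp A add) (\<lambda>i. beta b i [^]\<^bsub>addgrp A add\<^esub> x i) ?F \<otimes>\<^bsub>addgrp A add\<^esub>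
       finprod (addgrp A add) (\<lambda>i. beta b i [^]\<^bsub>addgrp A add\<^esub> y i) ?F"
    by (rule G.finprod_multf) (use b in auto)
  also have "\<dots> = add (alpha b x) (alpha b y)"
    using alpha_eq[OF b F, of x] alpha_eq[OF b F, of y] by auto
  finally show ?thesis .
qed

lemma lam_hom: "c \<in> A \<Longrightarrow> lam c \<in> hom (addgrp A add) (addgrp A add)"
  by (auto simp: hom_def lam_add)

lemma alpha_shift:
  assumes b: "b \<in> A" and y: "y \<in> Cset"
  shows "alpha b (shift s y) = lam (e b s) (alpha b y)"
proof -
  have inj: "inj_on (\<lambda>i. i + s) S" for S by (auto simp: inj_on_def)
  have fin: "finite {i. y i \<noteq> 0}" using y by (simp add: Cset_iff)
  have "alpha b (shift s y) = finprod (addgrp A add) (\<lambda>i. beta b i [^]\<^bsub>addgrp A add\<^esub> shift s y i) ((\<lambda>i. i + s) ` {i. y i \<noteq> 0})"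
    unfolding alpha_def supp_shift ..
  also have "\<dots> = finprod (addgrp A add) (\<lambda>i. beta b (i + s) [^]\<^bsub>addgrp A add\<^esub> shift s y (i + s)) {i. y i \<noteq> 0}"
    by (rule G.finprod_reindex) (use b inj in auto)
  also have "\<dots> = finprod (addgrp A add) (\<lambda>i. lam (e b s) (beta b i [^]\<^bsub>addgrp A add\<^esub> y i)) {i. y i \<noteq> 0}"
    by (rule G.finprod_cong') (use b in \<open>auto simp: shift_def beta_shift hom_int_pow[OF lam_hom] G.is_group\<close>)
  also have "\<dots> = lam (e b s) (alpha b y)"
    unfolding alpha_def
    by (rule hom_finprod_gen[OF Gcg Gcg lam_hom fin, symmetric]) (use b in auto)
  finally show ?thesis .
qed

definition P where "P b u m \<longleftrightarrow> (\<forall>y\<in>A. lam u y = lam (e b m) y)"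

lemma P_zero: "P b z 0" by (simp add: P_def)

lemma P_add: "b \<in> A \<Longrightarrow> u \<in> A \<Longrightarrow> v \<in> A \<Longrightarrow> P b u m \<Longrightarrow> P b v m' \<Longrightarrow> P b (add u v) (m + m')"
  by (simp add: P_def lam_addx e_add lam_mul)

lemma P_neg: assumes b: "b \<in> A" and u: "u \<in> A" and p: "P b u m" shows "P b (n u) (- m)"
  unfolding P_def
proof
  fix y assume y: "y \<in> A"
  define w where "w = lam (e b (- m)) y"
  have w: "w \<in> A" using b y by (simp add: w_def)
  have "lam u w = lam (mul (e b m) (e b (- m))) y" using p w b y by (simp add: P_def w_def lam_mul)
  also have "\<dots> = y" using b y by (simp flip: e_add)
  finally have "lam (n u) y = lam (n u) (lam u w)" by simp
  also have "\<dots> = w" using u w by (simp flip: lam_addx)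
  finally show "lam (n u) y = lam (e b (- m)) y" by (simp add: w_def)
qed

lemma P_pow: assumes b: "b \<in> A" and u: "u \<in> A" and p: "P b u m"
  shows "P b (u [^]\<^bsub>addgrp A add\<^esub> (k::int)) (m * k)"
proof (induction k rule: int_induct[where k=0])
  case base then show ?case using P_zero by (simp add: zdef)
next
  case (step1 i)
  have "u [^]\<^bsub>addgrp A add\<^esub> (i + 1) = add (u [^]\<^bsub>addgrp A add\<^esub> i) u"
    using u G.int_pow_mult[of u i 1] by simp
  then show ?case using P_add[OF b _ u step1(2) p] u by (simp add: algebra_simps)
next
  case (step2 i)
  have "u [^]\<^bsub>addgrp A add\<^esub> (i - 1) = add (u [^]\<^bsub>addgrp A add\<^esub> i) (n u)"
    using u G.int_pow_mult[of u i "-1"] G.int_pow_neg[of u 1] by (simp add: ndef)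
  then show ?case using P_add[OF b _ _ step2(2) P_neg[OF b u p]] u by (simp add: algebra_simps)
qed

lemma P_beta: "b \<in> A \<Longrightarrow> P b (beta b i) 1"
  by (simp add: P_def beta_def lam_lam)

lemma P_finprod: assumes b: "b \<in> A" and F: "finite F"
  shows "P b (finprod (addgrp A add) (\<lambda>i. beta b i [^]\<^bsub>addgrp A add\<^esub> x i) F) (sum x F)"
  using F
proof (induction F rule: finite_induct)
  case empty then show ?case using P_zero by (simp add: zdef)
next
  case (insert a F)
  have fc: "(\<lambda>i. beta b i [^]\<^bsub>addgrp A add\<^esub> x i) \<in> F \<rightarrow> carrier (addgrp A add)" using b by auto
  have "finprod (addgrp A add) (\<lambda>i. beta b i [^]\<^bsub>addgrp A add\<^esub> x i) (insert a F)
     = add (beta b a [^]\<^bsub>addgrp A add\<^esub> x a) (finprod (addgrp A add) (\<lambda>i. beta b i [^]\<^bsub>addgrp A add\<^esub> x i) F)"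
    using G.finprod_insert[OF insert.hyps(1,2) fc] b by simp
  moreover have pa: "P b (beta b a [^]\<^bsub>addgrp A add\<^esub> x a) (x a)"
    using P_pow[OF b _ P_beta[OF b], of a "x a"] b by simp
  ultimately show ?case
    using P_add[OF b _ _ pa insert.IH] b insert.hyps G.finprod_closed[OF fc] by simp
qed

lemma P_alpha: "b \<in> A \<Longrightarrow> x \<in> Cset \<Longrightarrow> P b (alpha b x) (coefsum x)"
  unfolding alpha_def coefsum_def by (rule P_finprod) (auto simp: Cset_iff)

lemma alpha_mul:
  assumes b: "b \<in> A" and x: "x \<in> Cset" and y: "y \<in> Cset"
  shows "alpha b (Cmul x y) = mul (alpha b x) (alpha b y)"
proof -
  have "alpha b (Cmul x y) = add (alpha b x) (alpha b (shift (coefsum x) y))"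
    unfolding Cmul_def Clam_shift using alpha_add[OF b x shift_closed[OF y]] .
  also have "\<dots> = add (alpha b x) (lam (alpha b x) (alpha b y))"
    using alpha_shift[OF b y] P_alpha[OF b x] b by (simp add: P_def)
  finally show ?thesis using b by (simp add: mul_lam)
qed

lemma alpha_c0: "b \<in> A \<Longrightarrow> alpha b (cbasis 0) = b"
proof -
  assume b: "b \<in> A"
  have s: "{i. cbasis 0 i \<noteq> 0} = insert 0 {}" by (auto simp: cbasis_def)
  show ?thesis unfolding alpha_def s using b
    by (subst G.finprod_insert) (auto simp: cbasis_def beta_def simp flip: zdef)
qed

end

lemma preimage_subgroup:
  assumes G: "group G" and H: "group H" and h: "h \<in> hom G H" and K: "subgroup K H"
  shows "subgroup {x \<in> carrier G. h x \<in> K} G"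
proof -
  interpret gh: group_hom G H h using G H h by (simp add: group_hom_def group_hom_axioms_def)
  show ?thesis
  proof (rule group.subgroupI[OF G])
    show "{x \<in> carrier G. h x \<in> K} \<noteq> {}" using subgroup.one_closed[OF K] by force
  qed (auto simp: subgroup.m_inv_closed[OF K] subgroup.m_closed[OF K])
qed

lemma eq_subgroup:
  assumes G: "group G" and H: "group H" and f: "f \<in> hom G H" and g: "g \<in> hom G H"
  shows "subgroup {x \<in> carrier G. f x = g x} G"
proof -
  interpret f: group_hom G H f using G H f by (simp add: group_hom_def group_hom_axioms_def)
  interpret g: group_hom G H g using G H g by (simp add: group_hom_def group_hom_axioms_def)
  show ?thesis
  proof (rule group.subgroupI[OF G])
    show "{x \<in> carrier G. f x = g x} \<noteq> {}" by force
  qed auto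
qed

lemma subbrace_gen_sub: "left_brace A add mul \<Longrightarrow> b \<in> A \<Longrightarrow> subbrace_gen A add mul b \<subseteq> A"
  unfolding subbrace_gen_def by (rule Inter_lower) (simp add: subbrace_self)

lemma universal:
  fixes A :: "'a set" and addA mulA :: "'a \<Rightarrow> 'a \<Rightarrow> 'a"
  assumes lbA: "left_brace A addA mulA" and r3: "rser A addA mulA 3 = {bzero A addA}"
    and b: "b \<in> A"
  shows "\<exists>\<alpha>. (brace_hom Cset Cadd Cmul addA mulA \<alpha>
                      \<and> \<alpha> ` Cset = subbrace_gen A addA mulA b \<and> \<alpha> (cbasis 0) = b)
                 \<and> (\<forall>\<beta>. brace_hom Cset Cadd Cmul addA mulA \<beta>
                      \<and> \<beta> ` Cset = subbrace_gen A addA mulA b \<and> \<beta> (cbasis 0) = b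
                      \<longrightarrow> (\<forall>x\<in>Cset. \<beta> x = \<alpha> x))"
proof -
  have l3: "lbrace3 A addA mulA"
    unfolding lbrace3_def lbrace_def lbrace3_axioms_def using lbA r3 by (intro conjI)
  define a where "a = lbrace3.alpha A addA mulA b"
  have acl: "a x \<in> A" for x unfolding a_def by (rule lbrace3.alpha_closed[OF l3 b])
  have aadd: "a (Cadd x y) = addA (a x) (a y)" if "x \<in> Cset" "y \<in> Cset" for x y
    unfolding a_def by (rule lbrace3.alpha_add[OF l3 b that])
  have amul: "a (Cmul x y) = mulA (a x) (a y)" if "x \<in> Cset" "y \<in> Cset" for x y
    unfolding a_def by (rule lbrace3.alpha_mul[OF l3 b that])
  have c0: "a (cbasis 0) = b" unfolding a_def by (rule lbrace3.alpha_c0[OF l3 b])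
  have ha: "a \<in> hom (addgrp Cset Cadd) (addgrp A addA)"
    unfolding hom_def Pi_def using acl aadd by simp
  have hm: "a \<in> hom (mulgrp Cset Cmul) (mulgrp A mulA)"
    unfolding hom_def Pi_def using acl amul by simp
  have bh: "brace_hom Cset Cadd Cmul addA mulA a"
    unfolding brace_hom_def using aadd amul by simp
  have lb: "lbrace A addA mulA" using lbA by (simp add: lbrace_def)
  have GA: "group (addgrp A addA)" using comm_group.axioms(2)[OF lbrace.Gcg[OF lb]] .
  have MA: "group (mulgrp A mulA)" using lbrace.Mg[OF lb] .
  have img: "a ` Cset = subbrace_gen A addA mulA b"
  proof
    show "a ` Cset \<subseteq> subbrace_gen A addA mulA b"
    proof (rule subsetI)
      fix y assume "y \<in> a ` Cset"
      then obtain x where x: "x \<in> Cset" and yx: "y = a x" by blast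
      show "y \<in> subbrace_gen A addA mulA b"
        unfolding subbrace_gen_def
      proof (rule InterI)
        fix B assume "B \<in> {B. subbrace A addA mulA B \<and> b \<in> B}"
        then have B: "subbrace A addA mulA B" "b \<in> B" by simp_all
        have s1: "subgroup {x \<in> Cset. a x \<in> B} (addgrp Cset Cadd)"
          using preimage_subgroup[OF addC_group GA ha] B(1) unfolding subbrace_def by simp
        have s2: "subgroup {x \<in> Cset. a x \<in> B} (mulgrp Cset Cmul)"
          using preimage_subgroup[OF mulC_group MA hm] B(1) unfolding subbrace_def by simp
        have "subbrace Cset Cadd Cmul {x \<in> Cset. a x \<in> B}"
          unfolding subbrace_def using s1 s2 by (rule conjI)
        moreover have "cbasis 0 \<in> {x \<in> Cset. a x \<in> B}" using c0 B(2) cbasis_closed[of 0] by simp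
        ultimately have "Cset \<subseteq> {x \<in> Cset. a x \<in> B}" by (rule C_gen)
        then show "y \<in> B" using x yx by blast
      qed
    qed
    have gh1: "group_hom (addgrp Cset Cadd) (addgrp A addA) a"
      unfolding group_hom_def group_hom_axioms_def using addC_group GA ha by (intro conjI)
    have gh2: "group_hom (mulgrp Cset Cmul) (mulgrp A mulA) a"
      unfolding group_hom_def group_hom_axioms_def using mulC_group MA hm by (intro conjI)
    have "subbrace A addA mulA (a ` Cset)"
      unfolding subbrace_def
      using group_hom.img_is_subgroup[OF gh1] group_hom.img_is_subgroup[OF gh2] by simp
    moreover have "b \<in> a ` Cset" using c0 cbasis_closed[of 0] by (metis image_eqI)
    ultimately show "subbrace_gen A addA mulA b \<subseteq> a ` Cset"
      unfolding subbrace_gen_def by (intro Inter_lower) simp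
  qed
  show ?thesis
  proof (rule exI[of _ a], intro conjI allI impI)
    show "brace_hom Cset Cadd Cmul addA mulA a" by (rule bh)
    show "a ` Cset = subbrace_gen A addA mulA b" by (rule img)
    show "a (cbasis 0) = b" by (rule c0)
    fix \<beta> assume h: "brace_hom Cset Cadd Cmul addA mulA \<beta> \<and> \<beta> ` Cset = subbrace_gen A addA mulA b \<and> \<beta> (cbasis 0) = b"
    have sub: "subbrace_gen A addA mulA b \<subseteq> A" by (rule subbrace_gen_sub[OF lbA b])
    have bA: "\<beta> x \<in> A" if "x \<in> Cset" for x
      using h that sub by blast
    have bh2: "\<beta> (Cadd x y) = addA (\<beta> x) (\<beta> y) \<and> \<beta> (Cmul x y) = mulA (\<beta> x) (\<beta> y)"
      if "x \<in> Cset" "y \<in> Cset" for x y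
      using h that unfolding brace_hom_def by blast
    have hba: "\<beta> \<in> hom (addgrp Cset Cadd) (addgrp A addA)"
      unfolding hom_def Pi_def using bA bh2 by simp
    have hbm: "\<beta> \<in> hom (mulgrp Cset Cmul) (mulgrp A mulA)"
      unfolding hom_def Pi_def using bA bh2 by simp
    have "subbrace Cset Cadd Cmul {x \<in> Cset. \<beta> x = a x}"
      unfolding subbrace_def
      using eq_subgroup[OF addC_group GA hba ha] eq_subgroup[OF mulC_group MA hbm hm] by simp
    moreover have "cbasis 0 \<in> {x \<in> Cset. \<beta> x = a x}" using c0 h cbasis_closed[of 0] by simp
    ultimately have "Cset \<subseteq> {x \<in> Cset. \<beta> x = a x}" by (rule C_gen)
    then show "\<forall>x\<in>Cset. \<beta> x = a x" by blast
  qed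
qed

theorem theoremC:
  fixes A :: "'a set" and addA mulA :: "'a \<Rightarrow> 'a \<Rightarrow> 'a"
  shows "left_brace Cset Cadd Cmul
    \<and> rser Cset Cadd Cmul 3 = {bzero Cset Cadd}
    \<and> subbrace_gen Cset Cadd Cmul (cbasis 0) = Cset
    \<and> (\<forall>j\<ge>1. lser Cset Cadd Cmul j \<noteq> {bzero Cset Cadd})
    \<and> (left_brace A addA mulA \<and> rser A addA mulA 3 = {bzero A addA} \<longrightarrow>
        (\<forall>b\<in>A. \<exists>\<alpha>. (brace_hom Cset Cadd Cmul addA mulA \<alpha>
                      \<and> \<alpha> ` Cset = subbrace_gen A addA mulA b \<and> \<alpha> (cbasis 0) = b)
                 \<and> (\<forall>\<beta>. brace_hom Cset Cadd Cmul addA mulA \<beta>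
                      \<and> \<beta> ` Cset = subbrace_gen A addA mulA b \<and> \<beta> (cbasis 0) = b
                      \<longrightarrow> (\<forall>x\<in>Cset. \<beta> x = \<alpha> x))))"
proof (intro conjI impI ballI)
  show "left_brace Cset Cadd Cmul" by (rule C_left_brace)
  show "rser Cset Cadd Cmul 3 = {bzero Cset Cadd}" by (rule rser3_C)
  show "subbrace_gen Cset Cadd Cmul (cbasis 0) = Cset" by (rule subbrace_gen_C)
  show "\<forall>j\<ge>1. lser Cset Cadd Cmul j \<noteq> {bzero Cset Cadd}" by (rule lser_C)
  fix b assume h: "left_brace A addA mulA \<and> rser A addA mulA 3 = {bzero A addA}" and b: "b \<in> A"
  show "\<exists>\<alpha>. (brace_hom Cset Cadd Cmul addA mulA \<alpha>
                      \<and> \<alpha> ` Cset = subbrace_gen A addA mulA b \<and> \<alpha> (cbasis 0) = b)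
                 \<and> (\<forall>\<beta>. brace_hom Cset Cadd Cmul addA mulA \<beta>
                      \<and> \<beta> ` Cset = subbrace_gen A addA mulA b \<and> \<beta> (cbasis 0) = b
                      \<longrightarrow> (\<forall>x\<in>Cset. \<beta> x = \<alpha> x))"
    using h b by (intro universal) auto
qed

end
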